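(* Let $p_1,p_2\ge 5$ be distinct primes, $\mathbb{K}_1=\mathbb{Q}(\zeta_{p_1}+\zeta_{p_1}^{-1})$, $\mathbb{K}_2=\mathbb{Q}(\zeta_{p_2}+\zeta_{p_2}^{-1})$, $e_i=\zeta_{p_1}^i+\zeta_{p_1}^{-i}$, $b_j=\zeta_{p_2}^j+\zeta_{p_2}^{-j}$, $n_1=\frac{p_1-1}{2}$, $n_2=\frac{p_2-1}{2}$, $n=n_1n_2$. Let $\mathbb{K}=\mathbb{K}_1\mathbb{K}_2$ and let $\mathcal{I}\subseteq\mathcal{O}_{\mathbb{K}}$ be the $\mathbb{Z}$-module with $\mathbb{Z}$-basis $$\gamma_1=\{e_1b_1,\dots,e_1b_{n_2},\;e_2b_1,\dots,e_2b_{n_2},\;\dots,\;e_{n_1}b_1,\dots,e_{n_1}b_{n_2-1},\,2e_{n_1}b_{n_2}\},$$ i.e. all products $e_ib_j$ ($1\le i\le n_1$, $1\le j\le n_2$) except that $e_{n_1}b_{n_2}$ is replaced by $2e_{n_1}b_{n_2}$. Let $\alpha=(2-e_1)(2-b_1)$. Then $\frac{1}{\sqrt{p_1p_2}}\sigma_\alpha(\mathcal{I})\subseteq\mathbb{R}^n$ is a rotated $D_n$-lattice.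
   Context: $\zeta_m=e^{2\pi i/m}$. $\mathbb{K}$ is totally real Galois with Galois group $\{\sigma_1,\dots,\sigma_n\}$; $\sigma_\alpha(x)=(\sqrt{\sigma_1(\alpha)}\sigma_1(x),\dots,\sqrt{\sigma_n(\alpha)}\sigma_n(x))$. $D_n=\{(x_1,\dots,x_n)\in\mathbb{Z}^n:\sum x_i\text{ even}\}$; a rotated $D_n$-lattice is $R(D_n)$ for an orthogonal linear map $R$ of $\mathbb{R}^n$. *)

theory Defs
  imports Complex_Main "HOL-Computational_Algebra.Primes"
begin

definition zeta :: "nat \<Rightarrow> complex" where
  "zeta m = exp (2 * of_real pi * \<i> / of_nat m)"

text \<open>cyc p k = zeta_p^k + zeta_p^(-k); e_i = cyc p1 i, b_j = cyc p2 j\<close>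
definition cyc :: "nat \<Rightarrow> nat \<Rightarrow> complex" where
  "cyc p k = zeta p ^ k + inverse (zeta p) ^ k"

text \<open>Index set {1..n1} x {1..n2}: it indexes both the basis gamma_1 (pairs (i,j))
  and the Galois group of K = K1 K2 (pairs (a,c), the automorphism sending
  zeta_p1 + zeta_p1^-1 to zeta_p1^a + zeta_p1^-a and zeta_p2 + zeta_p2^-1 to
  zeta_p2^c + zeta_p2^-c), hence also the coordinates of R^n.\<close>
definition gidx :: "nat \<Rightarrow> nat \<Rightarrow> (nat \<times> nat) set" where
  "gidx p1 p2 = {1..(p1 - 1) div 2} \<times> {1..(p2 - 1) div 2}"

text \<open>Coefficient of e_i b_j in the basis gamma_1 (2 for the last element).\<close>
definition gcoef :: "nat \<Rightarrow> nat \<Rightarrow> nat \<times> nat \<Rightarrow> int" where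
  "gcoef p1 p2 ij = (if ij = ((p1 - 1) div 2, (p2 - 1) div 2) then 2 else 1)"

text \<open>Image under the Galois automorphism (a,c) of the element
  x = sum m(i,j) * gcoef(i,j) * e_i b_j of the module I.\<close>
definition gal_elem :: "nat \<Rightarrow> nat \<Rightarrow> nat \<times> nat \<Rightarrow> (nat \<times> nat \<Rightarrow> int) \<Rightarrow> complex" where
  "gal_elem p1 p2 ac m = (\<Sum>ij\<in>gidx p1 p2.
      of_int (m ij * gcoef p1 p2 ij) * cyc p1 (fst ac * fst ij) * cyc p2 (snd ac * snd ij))"

definition gal_alpha :: "nat \<Rightarrow> nat \<Rightarrow> nat \<times> nat \<Rightarrow> complex" where
  "gal_alpha p1 p2 ac = (2 - cyc p1 (fst ac)) * (2 - cyc p2 (snd ac))"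

text \<open>The set (1/sqrt(p1 p2)) sigma_alpha(I) as vectors indexed by gidx (zero outside).
  All values are real; Re just passes to the real type.\<close>
definition twisted_lattice :: "nat \<Rightarrow> nat \<Rightarrow> (nat \<times> nat \<Rightarrow> real) set" where
  "twisted_lattice p1 p2 = range (\<lambda>m :: nat \<times> nat \<Rightarrow> int. (\<lambda>ac.
      if ac \<in> gidx p1 p2 then
        (1 / sqrt (real (p1 * p2))) * sqrt (Re (gal_alpha p1 p2 ac)) * Re (gal_elem p1 p2 ac m)
      else 0))"

definition Dlat :: "'i set \<Rightarrow> ('i \<Rightarrow> real) set" where
  "Dlat S = {(\<lambda>k. if k \<in> S then real_of_int (z k) else 0) | z. even (\<Sum>k\<in>S. z k)}"

definition supported :: "'i set \<Rightarrow> ('i \<Rightarrow> real) \<Rightarrow> bool" where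
  "supported S x \<longleftrightarrow> (\<forall>k. k \<notin> S \<longrightarrow> x k = 0)"

definition orthogonal_on :: "'i set \<Rightarrow> (('i \<Rightarrow> real) \<Rightarrow> ('i \<Rightarrow> real)) \<Rightarrow> bool" where
  "orthogonal_on S R \<longleftrightarrow>
     (\<forall>x. supported S x \<longrightarrow> supported S (R x)) \<and>
     (\<forall>x y. supported S x \<longrightarrow> supported S y \<longrightarrow> R (\<lambda>k. x k + y k) = (\<lambda>k. R x k + R y k)) \<and>
     (\<forall>x c. supported S x \<longrightarrow> R (\<lambda>k. c * x k) = (\<lambda>k. c * R x k)) \<and>
     (\<forall>x y. supported S x \<longrightarrow> supported S y \<longrightarrow>
        (\<Sum>k\<in>S. R x k * R y k) = (\<Sum>k\<in>S. x k * y k))"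

end

theory Submission imports Defs "HOL-Analysis.Complex_Transcendental" begin

lemma zeta_pow: "zeta p ^ m = exp (of_nat m * (2 * of_real pi * \<i> / of_nat p))"
  unfolding zeta_def by (metis exp_of_nat_mult times_divide_eq_right)

lemma zeta_pow_eq_1:
  assumes "p > 0" shows "zeta p ^ m = 1 \<longleftrightarrow> p dvd m"
proof
  assume "p dvd m"
  then obtain q where "m = p * q" by auto
  then have "zeta p ^ m = (zeta p ^ p) ^ q" by (simp add: power_mult)
  moreover have "zeta p ^ p = 1" using assms unfolding zeta_pow by simp
  ultimately show "zeta p ^ m = 1" by simp
next
  assume "zeta p ^ m = 1"
  then obtain n :: int where n: "Im (of_nat m * (2 * of_real pi * \<i> / of_nat p)) = of_int (2 * n) * pi"
    unfolding zeta_pow exp_eq_1 by blast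
  have "Im (of_nat m * (2 * of_real pi * \<i> / of_nat p)) = 2 * pi * m / p"
    by (simp add: Im_divide power2_eq_square)
  with n have "2 * pi * m / p = 2 * n * pi" by simp
  then have "real m = real p * n" using assms by (simp add: field_simps)
  then have "int m = int p * n" by (metis of_int_eq_iff of_int_mult of_int_of_nat_eq)
  then show "p dvd m" by (metis dvd_triv_left int_dvd_int_iff)
qed

lemma zeta_nz: "zeta p \<noteq> 0" unfolding zeta_def by simp

lemma inv_zeta: "inverse (zeta p) = cnj (zeta p)"
  unfolding zeta_def by (simp add: exp_cnj exp_minus[symmetric])

lemma cyc_real: "cyc p t = of_real (Re (cyc p t))"
  unfolding cyc_def inv_zeta by (simp add: complex_eq_iff complex_cnj_power[symmetric] del: complex_cnj_power)

lemma cyc_le2: "Re (cyc p t) \<le> 2"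
proof -
  have "norm (zeta p) = 1" unfolding zeta_def by simp
  then have "Re (zeta p ^ t) \<le> 1" by (metis complex_Re_le_cmod norm_power power_one)
  then show ?thesis unfolding cyc_def inv_zeta by (simp add: complex_cnj_power[symmetric] del: complex_cnj_power)
qed

lemma tel: "(\<Sum>k\<in>{1..i::nat}. f k - f (k - 1)) = (f i - f 0 :: 'a::ab_group_add)"
  by (induction i arbitrary: f) (auto simp: atLeastAtMostSuc_conv)

lemma sum_roots:
  assumes "p > 0"
  shows "(\<Sum>a<p. zeta p ^ (a * m)) = (if p dvd m then of_nat p else 0)"
proof (cases "p dvd m")
  case True
  then have "\<And>a. zeta p ^ (a * m) = 1" using zeta_pow_eq_1[OF assms] by (simp add: mult.commute)
  with True show ?thesis by simp
next
  case False
  let ?x = "zeta p ^ m"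
  have x1: "?x \<noteq> 1" using zeta_pow_eq_1[OF assms] False by simp
  have xp: "?x ^ p = 1" using zeta_pow_eq_1[OF assms, of "m * p"] by (simp add: power_mult[symmetric])
  have "(\<Sum>a<p. zeta p ^ (a * m)) = (\<Sum>a<p. ?x ^ a)" by (simp add: power_mult[symmetric] mult.commute)
  also have "\<dots> = 0" using geometric_sum[OF x1, of p] xp by simp
  finally show ?thesis using False by simp
qed

lemma L1:
  assumes p: "p = 2 * n + 1"
  shows "(\<Sum>a\<in>{1..n}. cyc p (a * m)) = (if p dvd m then of_nat p - 1 else -1)"
proof -
  let ?z = "zeta p"
  have inv: "inverse ?z ^ (a * m) = ?z ^ ((p - a) * m)" if "a \<le> p" for a
  proof -
    have "?z ^ (a * m) * ?z ^ ((p - a) * m) = ?z ^ (p * m)"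
      using that by (simp add: power_add[symmetric] add_mult_distrib[symmetric])
    also have "\<dots> = 1" using zeta_pow_eq_1[of p "p * m"] p by (simp del: mult_Suc)
    finally show ?thesis by (metis inverse_unique power_inverse)
  qed
  have "(\<Sum>a\<in>{1..n}. cyc p (a * m)) = (\<Sum>a\<in>{1..n}. ?z ^ (a * m)) + (\<Sum>a\<in>{1..n}. ?z ^ ((p - a) * m))"
    unfolding cyc_def using inv p by (simp add: sum.distrib)
  also have "(\<Sum>a\<in>{1..n}. ?z ^ ((p - a) * m)) = (\<Sum>b\<in>{n+1..n+n}. ?z ^ (b * m))"
    by (rule sum.reindex_bij_witness[where i="\<lambda>b. p - b" and j="\<lambda>a. p - a"]) (auto simp: p)
  also have "(\<Sum>a\<in>{1..n}. ?z ^ (a * m)) + \<dots> = (\<Sum>a\<in>{1..n+n}. ?z ^ (a * m))"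
    by (rule sum.ub_add_nat[symmetric]) simp
  also have "\<dots> = (\<Sum>a<p. ?z ^ (a * m)) - 1"
  proof -
    have "(\<Sum>a<p. ?z ^ (a * m)) = (\<Sum>a<Suc (n+n). ?z ^ (a * m))" using p by (simp only: mult_2 Suc_eq_plus1)
    also have "\<dots> = 1 + (\<Sum>a<n+n. ?z ^ (Suc a * m))" by (subst sum.lessThan_Suc_shift) simp
    also have "(\<Sum>a<n+n. ?z ^ (Suc a * m)) = (\<Sum>a\<in>{1..n+n}. ?z ^ (a * m))"
      using sum.atLeast1_atMost_eq[of "\<lambda>a. ?z ^ (a * m)" "n+n"] by simp
    finally show ?thesis by simp
  qed
  also have "\<dots> = (if p dvd m then of_nat p - 1 else -1)" using sum_roots[of p m] p by simp
  finally show ?thesis .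
qed

lemma telw:
  fixes w v :: complex
  assumes wv: "w * v = 1" and wp: "w ^ (2 * n + 1) = 1" and k: "1 \<le> k" "k \<le> n"
  shows "(1 - w) * (\<Sum>i\<in>{k..n}. w ^ i + v ^ i) = w ^ k - v ^ (k - 1)"
proof -
  define f where "f i = v ^ (i - 1) - w ^ i" for i
  have "(1 - w) * (\<Sum>i\<in>{k..n}. w ^ i + v ^ i) = (\<Sum>i\<in>{k..n}. f (Suc i) - f i)"
    unfolding sum_distrib_left
  proof (rule sum.cong[OF refl])
    fix i assume "i \<in> {k..n}"
    then obtain j where j: "i = Suc j" using k by (cases i) auto
    have "w * v ^ i = v ^ j" using wv by (simp add: j mult.assoc[symmetric])
    then show "(1 - w) * (w ^ i + v ^ i) = f (Suc i) - f i"
      unfolding f_def by (simp add: j algebra_simps)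
  qed
  also have "\<dots> = f (Suc n) - f k" using k by (intro sum_Suc_diff) simp
  also have "f (Suc n) = 0"
  proof -
    have e: "Suc n + n = 2 * n + 1" by simp
    have "w ^ Suc n * w ^ n = 1" using wp by (metis e power_add)
    moreover have "v ^ n * w ^ n = 1" using wv by (simp add: power_mult_distrib[symmetric] mult.commute)
    ultimately have "w ^ Suc n = v ^ n" by (metis mult_cancel_right mult_zero_right zero_neq_one)
    then show ?thesis unfolding f_def by simp
  qed
  finally show ?thesis unfolding f_def by simp
qed

lemma wv_pow:
  fixes w v :: complex
  assumes wv: "w * v = 1"
  shows "w ^ a * v ^ b = (if b \<le> a then w ^ (a - b) else v ^ (b - a))"
proof (cases "b \<le> a")
  case True
  then have "w ^ a * v ^ b = w ^ (a - b) * (w * v) ^ b"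
    by (simp add: power_mult_distrib power_add[symmetric])
  then show ?thesis using True wv by simp
next
  case False
  then have "w ^ a * v ^ b = v ^ (b - a) * (w * v) ^ a"
    by (simp add: power_mult_distrib power_add[symmetric] algebra_simps)
  then show ?thesis using False wv by simp
qed

lemma keyc:
  assumes p: "p = 2 * n + 1" and k: "1 \<le> k" "k \<le> n" and k': "1 \<le> k'" "k' \<le> n"
  shows "(\<Sum>a\<in>{1..n}. (2 - cyc p a) * (\<Sum>i\<in>{k..n}. cyc p (a * i)) * (\<Sum>i\<in>{k'..n}. cyc p (a * i)))
     = (if k = k' then of_nat p else 0)"
proof -
  define d where "d = (if k \<le> k' then k' - k else k - k')"
  define s where "s = k + k' - 1"
  let ?z = "zeta p"
  have tm: "(2 - cyc p a) * (\<Sum>i\<in>{k..n}. cyc p (a * i)) * (\<Sum>i\<in>{k'..n}. cyc p (a * i))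
      = cyc p (a * d) - cyc p (a * s)" for a
  proof -
    define w where "w = ?z ^ a"
    define v where "v = inverse ?z ^ a"
    have wv: "w * v = 1" unfolding w_def v_def using zeta_nz[of p]
      by (simp add: power_mult_distrib[symmetric])
    have vw: "v * w = 1" using wv by (simp add: mult.commute)
    have "?z ^ (a * p) = 1" using zeta_pow_eq_1[of p "a * p"] p by (metis dvd_triv_right zero_less_Suc Suc_eq_plus1)
    then have wp: "w ^ (2 * n + 1) = 1" unfolding w_def p[symmetric] by (simp add: power_mult)
    have "v ^ (2 * n + 1) * w ^ (2 * n + 1) = 1" using vw by (metis power_mult_distrib power_one)
    then have vp: "v ^ (2 * n + 1) = 1" using wp by simp
    have c: "cyc p (a * i) = w ^ i + v ^ i" for i unfolding cyc_def w_def v_def by (simp add: power_mult)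
    have c1: "cyc p a = w + v" using c[of 1] by simp
    have "2 - cyc p a = (1 - w) * (1 - v)" using wv c1 by (simp add: algebra_simps)
    then have "(2 - cyc p a) * (\<Sum>i\<in>{k..n}. cyc p (a * i)) * (\<Sum>i\<in>{k'..n}. cyc p (a * i))
       = ((1 - w) * (\<Sum>i\<in>{k..n}. w ^ i + v ^ i)) * ((1 - v) * (\<Sum>i\<in>{k'..n}. v ^ i + w ^ i))"
    proof -
      have s1: "(\<Sum>i\<in>{k..n}. cyc p (a * i)) = (\<Sum>i\<in>{k..n}. w ^ i + v ^ i)" by (simp add: c)
      have s2: "(\<Sum>i\<in>{k'..n}. cyc p (a * i)) = (\<Sum>i\<in>{k'..n}. v ^ i + w ^ i)" by (simp add: c add.commute)
      show ?thesis using \<open>2 - cyc p a = (1 - w) * (1 - v)\<close> unfolding s1 s2 by (simp only: mult_ac)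
    qed
    also have "\<dots> = (w ^ k - v ^ (k - 1)) * (v ^ k' - w ^ (k' - 1))"
      using telw[OF wv wp k] telw[OF vw vp k'] by simp
    also have "\<dots> = w ^ k * v ^ k' + w ^ (k' - 1) * v ^ (k - 1) - w ^ k * w ^ (k' - 1) - v ^ (k - 1) * v ^ k'"
      by (simp add: algebra_simps)
    also have "\<dots> = (w ^ d + v ^ d) - (w ^ s + v ^ s)"
      using k k' unfolding wv_pow[OF wv] d_def s_def by (auto simp: power_add[symmetric])
    finally show ?thesis by (simp add: c)
  qed
  have sd: "\<not> p dvd s" using k k' p unfolding s_def by (auto dest: dvd_imp_le)
  have dd: "p dvd d \<longleftrightarrow> k = k'" using k k' p unfolding d_def by (auto dest: dvd_imp_le)
  show ?thesis unfolding tm sum_subtractf L1[OF p] using sd dd by simp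
qed

lemma restrict_le:
  fixes f :: "nat \<Rightarrow> 'a::comm_monoid_add"
  assumes "i \<le> N"
  shows "(\<Sum>k\<in>{1..N}. if k \<le> i then f k else 0) = (\<Sum>k\<in>{1..i}. f k)"
proof -
  have "{k \<in> {1..N}. k \<le> i} = {1..i}" using assms by auto
  then show ?thesis using sum.inter_filter[of "{1..N}" f "\<lambda>k. k \<le> i"] by simp
qed

lemma restrict_ge:
  fixes f :: "nat \<Rightarrow> 'a::comm_monoid_add"
  assumes "1 \<le> k"
  shows "(\<Sum>i\<in>{1..N}. if k \<le> i then f i else 0) = (\<Sum>i\<in>{k..N}. f i)"
proof -
  have "{i \<in> {1..N}. k \<le> i} = {k..N}" using assms by auto
  then show ?thesis using sum.inter_filter[of "{1..N}" f "\<lambda>i. k \<le> i"] by simp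
qed

definition H :: "nat \<Rightarrow> nat \<Rightarrow> nat \<Rightarrow> real" where
  "H p a k = (\<Sum>i\<in>{1..(p - 1) div 2}. if k \<le> i then Re (cyc p (a * i)) else 0)"

lemma keyr:
  assumes p: "p = 2 * n + 1" and k: "1 \<le> k" "k \<le> n" and k': "1 \<le> k'" "k' \<le> n"
  shows "(\<Sum>a\<in>{1..n}. (2 - Re (cyc p a)) * H p a k * H p a k') = (if k = k' then real p else 0)"
proof -
  have n: "(p - 1) div 2 = n" using p by simp
  have h: "H p a j = (\<Sum>i\<in>{j..n}. Re (cyc p (a * i)))" if "1 \<le> j" for a j
    unfolding H_def n using restrict_ge[OF that] by simp
  have "complex_of_real (\<Sum>a\<in>{1..n}. (2 - Re (cyc p a)) * H p a k * H p a k')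
     = (\<Sum>a\<in>{1..n}. (2 - cyc p a) * (\<Sum>i\<in>{k..n}. cyc p (a * i)) * (\<Sum>i\<in>{k'..n}. cyc p (a * i)))"
    unfolding h[OF k(1)] h[OF k'(1)] of_real_sum of_real_mult of_real_diff
    by (simp only: cyc_real[symmetric] of_real_numeral)
  also have "\<dots> = (if k = k' then of_nat p else 0)" by (rule keyc[OF p k k'])
  also have "\<dots> = complex_of_real (if k = k' then real p else 0)" by simp
  finally show ?thesis by (simp only: of_real_eq_iff)
qed

lemma orth_kernel:
  fixes K :: "'i \<Rightarrow> 'i \<Rightarrow> real"
  assumes fin: "finite S"
    and on: "\<And>u u'. u \<in> S \<Longrightarrow> u' \<in> S \<Longrightarrow> (\<Sum>ac\<in>S. K ac u * K ac u') = (if u = u' then 1 else 0)"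
  shows "orthogonal_on S (\<lambda>x ac. if ac \<in> S then \<Sum>u\<in>S. x u * K ac u else 0)"
  unfolding orthogonal_on_def
proof (intro conjI allI impI)
  fix x y :: "'i \<Rightarrow> real"
  assume sx: "supported S x" and sy: "supported S y"
  have "(\<Sum>k\<in>S. (if k \<in> S then \<Sum>u\<in>S. x u * K k u else 0) * (if k \<in> S then \<Sum>u\<in>S. y u * K k u else 0))
      = (\<Sum>k\<in>S. (\<Sum>u\<in>S. x u * K k u) * (\<Sum>u'\<in>S. y u' * K k u'))" by simp
  also have "\<dots> = (\<Sum>k\<in>S. \<Sum>u\<in>S. \<Sum>u'\<in>S. x u * y u' * (K k u * K k u'))"
    by (simp add: sum_product mult_ac)
  also have "\<dots> = (\<Sum>u\<in>S. \<Sum>u'\<in>S. \<Sum>k\<in>S. x u * y u' * (K k u * K k u'))"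
    by (subst sum.swap) (intro sum.cong refl sum.swap)
  also have "\<dots> = (\<Sum>u\<in>S. \<Sum>u'\<in>S. x u * y u' * (if u = u' then 1 else 0))"
    by (intro sum.cong refl) (simp add: sum_distrib_left[symmetric] on)
  also have "\<dots> = (\<Sum>u\<in>S. x u * y u)" using fin by (simp add: if_distrib cong: if_cong)
  finally show "(\<Sum>k\<in>S. (if k \<in> S then \<Sum>u\<in>S. x u * K k u else 0) * (if k \<in> S then \<Sum>u\<in>S. y u * K k u else 0))
      = (\<Sum>k\<in>S. x k * y k)" .
next
  fix x :: "'i \<Rightarrow> real"
  show "supported S (\<lambda>ac. if ac \<in> S then \<Sum>u\<in>S. x u * K ac u else 0)"
    unfolding supported_def by simp
next
  fix x y :: "'i \<Rightarrow> real"
  show "(\<lambda>ac. if ac \<in> S then \<Sum>u\<in>S. (x u + y u) * K ac u else 0) =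
       (\<lambda>k. (if k \<in> S then \<Sum>u\<in>S. x u * K k u else 0) + (if k \<in> S then \<Sum>u\<in>S. y u * K k u else 0))"
    by (rule ext) (simp add: sum.distrib distrib_right)
next
  fix x :: "'i \<Rightarrow> real" and c :: real
  show "(\<lambda>ac. if ac \<in> S then \<Sum>u\<in>S. c * x u * K ac u else 0) =
       (\<lambda>k. c * (if k \<in> S then \<Sum>u\<in>S. x u * K k u else 0))"
    by (rule ext) (simp add: sum_distrib_left mult.assoc)
qed

lemma sum_pair: "(\<Sum>ac\<in>X \<times> Y. f (fst ac) (snd ac)) = (\<Sum>a\<in>X. \<Sum>c\<in>Y. f a c)"
  by (simp add: sum.cartesian_product split_def)

definition kap :: "nat \<Rightarrow> nat \<Rightarrow> nat \<times> nat \<Rightarrow> real" where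
  "kap p1 p2 ac = 1 / sqrt (real (p1 * p2)) * sqrt (Re (gal_alpha p1 p2 ac))"

definition KK :: "nat \<Rightarrow> nat \<Rightarrow> nat \<times> nat \<Rightarrow> nat \<times> nat \<Rightarrow> real" where
  "KK p1 p2 ac u = kap p1 p2 ac * H p1 (fst ac) (fst u) * H p2 (snd ac) (snd u)"

lemma re_alpha: "Re (gal_alpha p1 p2 (a, c)) = (2 - Re (cyc p1 a)) * (2 - Re (cyc p2 c))"
proof -
  define x1 where "x1 = Re (cyc p1 a)"
  define x2 where "x2 = Re (cyc p2 c)"
  have e1: "cyc p1 a = of_real x1" unfolding x1_def by (rule cyc_real)
  have e2: "cyc p2 c = of_real x2" unfolding x2_def by (rule cyc_real)
  show ?thesis unfolding gal_alpha_def fst_conv snd_conv e1 e2 x1_def[symmetric] x2_def[symmetric]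
    by simp
qed

lemma kap_sq:
  assumes "p1 > 0" "p2 > 0"
  shows "kap p1 p2 (a, c) ^ 2 = (2 - Re (cyc p1 a)) * (2 - Re (cyc p2 c)) / (real p1 * real p2)"
proof -
  have "0 \<le> (2 - Re (cyc p1 a)) * (2 - Re (cyc p2 c))" using cyc_le2[of p1 a] cyc_le2[of p2 c] by simp
  then show ?thesis unfolding kap_def re_alpha using assms
    by (simp add: power_mult_distrib power_divide)
qed

lemma kernel_on:
  assumes p1: "p1 = 2 * n1 + 1" and p2: "p2 = 2 * n2 + 1"
    and u: "u \<in> gidx p1 p2" and u': "u' \<in> gidx p1 p2"
  shows "(\<Sum>ac\<in>gidx p1 p2. KK p1 p2 ac u * KK p1 p2 ac u') = (if u = u' then 1 else 0)"
proof -
  have g: "gidx p1 p2 = {1..n1} \<times> {1..n2}" unfolding gidx_def p1 p2 by simp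
  obtain k l where kl: "u = (k, l)" by (cases u)
  obtain k' l' where kl': "u' = (k', l')" by (cases u')
  have r: "1 \<le> k" "k \<le> n1" "1 \<le> l" "l \<le> n2" "1 \<le> k'" "k' \<le> n1" "1 \<le> l'" "l' \<le> n2"
    using u u' unfolding g kl kl' by auto
  define A where "A a = (2 - Re (cyc p1 a)) * H p1 a k * H p1 a k'" for a
  define B where "B c = (2 - Re (cyc p2 c)) * H p2 c l * H p2 c l'" for c
  have "(\<Sum>ac\<in>gidx p1 p2. KK p1 p2 ac u * KK p1 p2 ac u')
      = (\<Sum>ac\<in>{1..n1} \<times> {1..n2}. A (fst ac) * B (snd ac) / (real p1 * real p2))"
  proof (rule sum.cong[OF g])
    fix ac assume "ac \<in> {1..n1} \<times> {1..n2}"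
    obtain a c where ac: "ac = (a, c)" by (cases ac)
    have "KK p1 p2 ac u * KK p1 p2 ac u' = kap p1 p2 (a, c) ^ 2 * (H p1 a k * H p1 a k') * (H p2 c l * H p2 c l')"
      unfolding KK_def ac kl kl' by (simp add: power2_eq_square mult_ac)
    also have "\<dots> = A a * B c / (real p1 * real p2)"
    proof -
      have "kap p1 p2 (a, c) ^ 2 = (2 - Re (cyc p1 a)) * (2 - Re (cyc p2 c)) / (real p1 * real p2)"
        by (rule kap_sq) (use p1 p2 in auto)
      then show ?thesis unfolding A_def B_def by (simp add: mult_ac)
    qed
    finally show "KK p1 p2 ac u * KK p1 p2 ac u' = A (fst ac) * B (snd ac) / (real p1 * real p2)"
      by (simp add: ac)
  qed
  also have "\<dots> = (\<Sum>a\<in>{1..n1}. \<Sum>c\<in>{1..n2}. A a * B c) / (real p1 * real p2)"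
    using sum_pair[of "\<lambda>a c. A a * B c / (real p1 * real p2)" "{1..n1}" "{1..n2}"]
    by (simp only: sum_divide_distrib)
  also have "\<dots> = (\<Sum>a\<in>{1..n1}. A a) * (\<Sum>c\<in>{1..n2}. B c) / (real p1 * real p2)"
    by (simp add: sum_product)
  also have "\<dots> = (if k = k' then real p1 else 0) * (if l = l' then real p2 else 0) / (real p1 * real p2)"
    unfolding A_def B_def using keyr[OF p1 r(1,2,5,6)] keyr[OF p2 r(3,4,7,8)] by simp
  also have "\<dots> = (if u = u' then 1 else 0)" using p1 p2 unfolding kl kl' by simp
  finally show ?thesis .
qed

lemma sum_if_const:
  "(\<Sum>l\<in>L. if P then f l else 0) = (if P then (\<Sum>l\<in>L. f l) else (0::'a::comm_monoid_add))"
  by simp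

lemma inv_diff:
  fixes y :: "nat \<times> nat \<Rightarrow> int"
  defines "Y \<equiv> \<lambda>(i, j). if 1 \<le> i \<and> 1 \<le> j then y (i, j) else 0"
  assumes "1 \<le> i" "i \<le> N1" "1 \<le> j" "j \<le> N2"
  shows "(\<Sum>u\<in>{1..N1} \<times> {1..N2}. if fst u \<le> i \<and> snd u \<le> j then
          Y (fst u, snd u) - Y (fst u - 1, snd u) - Y (fst u, snd u - 1) + Y (fst u - 1, snd u - 1) else 0)
       = y (i, j)"
proof -
  let ?z = "\<lambda>k l. Y (k, l) - Y (k - 1, l) - Y (k, l - 1) + Y (k - 1, l - 1)"
  have "(\<Sum>u\<in>{1..N1} \<times> {1..N2}. if fst u \<le> i \<and> snd u \<le> j then ?z (fst u) (snd u) else 0)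
      = (\<Sum>k\<in>{1..N1}. \<Sum>l\<in>{1..N2}. if k \<le> i \<and> l \<le> j then ?z k l else 0)"
    by (rule sum_pair)
  also have "\<dots> = (\<Sum>k\<in>{1..N1}. if k \<le> i then (\<Sum>l\<in>{1..j}. ?z k l) else 0)"
  proof (rule sum.cong[OF refl])
    fix k
    have "(\<Sum>l\<in>{1..N2}. if k \<le> i \<and> l \<le> j then ?z k l else 0)
        = (\<Sum>l\<in>{1..N2}. if k \<le> i then (if l \<le> j then ?z k l else 0) else 0)"
      by (intro sum.cong) auto
    also have "\<dots> = (if k \<le> i then (\<Sum>l\<in>{1..N2}. if l \<le> j then ?z k l else 0) else 0)"
      by (rule sum_if_const)
    also have "\<dots> = (if k \<le> i then (\<Sum>l\<in>{1..j}. ?z k l) else 0)"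
      using restrict_le[OF assms(5), of "?z k"] by simp
    finally show "(\<Sum>l\<in>{1..N2}. if k \<le> i \<and> l \<le> j then ?z k l else 0) = \<dots>" .
  qed
  also have "\<dots> = (\<Sum>k\<in>{1..i}. \<Sum>l\<in>{1..j}. ?z k l)"
    by (rule restrict_le[OF assms(3)])
  also have "\<dots> = (\<Sum>k\<in>{1..i}. (Y (k, j) - Y (k, 0)) - (Y (k - 1, j) - Y (k - 1, 0)))"
  proof (rule sum.cong[OF refl])
    fix k
    have "(\<Sum>l\<in>{1..j}. ?z k l) = (\<Sum>l\<in>{1..j}. (Y (k, l) - Y (k - 1, l)) - (Y (k, l - 1) - Y (k - 1, l - 1)))"
      by (intro sum.cong) auto
    also have "\<dots> = (Y (k, j) - Y (k - 1, j)) - (Y (k, 0) - Y (k - 1, 0))"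
      by (rule tel[where f = "\<lambda>l. Y (k, l) - Y (k - 1, l)"])
    finally show "(\<Sum>l\<in>{1..j}. ?z k l) = (Y (k, j) - Y (k, 0)) - (Y (k - 1, j) - Y (k - 1, 0))" by simp
  qed
  also have "\<dots> = (Y (i, j) - Y (i, 0)) - (Y (0, j) - Y (0, 0))"
    by (rule tel[where f = "\<lambda>k. Y (k, j) - Y (k, 0)"])
  also have "\<dots> = y (i, j)" using assms unfolding Y_def by simp
  finally show ?thesis .
qed

definition RR :: "nat \<Rightarrow> nat \<Rightarrow> (nat \<times> nat \<Rightarrow> real) \<Rightarrow> (nat \<times> nat \<Rightarrow> real)" where
  "RR p1 p2 x = (\<lambda>ac. if ac \<in> gidx p1 p2 then \<Sum>u\<in>gidx p1 p2. x u * KK p1 p2 ac u else 0)"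

definition PP :: "(nat \<times> nat) set \<Rightarrow> (nat \<times> nat \<Rightarrow> 'a::comm_monoid_add) \<Rightarrow> nat \<times> nat \<Rightarrow> 'a" where
  "PP S x ij = (\<Sum>u\<in>S. if fst u \<le> fst ij \<and> snd u \<le> snd ij then x u else 0)"

lemma HH:
  "H p1 a k * H p2 c l = (\<Sum>ij\<in>gidx p1 p2. if k \<le> fst ij \<and> l \<le> snd ij then
      Re (cyc p1 (a * fst ij)) * Re (cyc p2 (c * snd ij)) else 0)"
  unfolding H_def gidx_def sum_product sum.cartesian_product
  by (intro sum.cong refl) (auto simp: split_def)

lemma RR_eq:
  assumes "ac \<in> gidx p1 p2"
  shows "RR p1 p2 x ac = kap p1 p2 ac * (\<Sum>ij\<in>gidx p1 p2. PP (gidx p1 p2) x ij *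
      Re (cyc p1 (fst ac * fst ij)) * Re (cyc p2 (snd ac * snd ij)))"
proof -
  let ?S = "gidx p1 p2"
  let ?c = "\<lambda>ij. Re (cyc p1 (fst ac * fst ij)) * Re (cyc p2 (snd ac * snd ij))"
  have "RR p1 p2 x ac = (\<Sum>u\<in>?S. \<Sum>ij\<in>?S. kap p1 p2 ac * (x u * (if fst u \<le> fst ij \<and> snd u \<le> snd ij then ?c ij else 0)))"
    unfolding RR_def KK_def using assms
    by (simp add: HH sum_distrib_left mult_ac)
  also have "\<dots> = (\<Sum>ij\<in>?S. \<Sum>u\<in>?S. kap p1 p2 ac * (x u * (if fst u \<le> fst ij \<and> snd u \<le> snd ij then ?c ij else 0)))"
    by (rule sum.swap)
  also have "\<dots> = kap p1 p2 ac * (\<Sum>ij\<in>?S. PP ?S x ij * ?c ij)"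
    unfolding sum_distrib_left PP_def sum_distrib_right
    by (intro sum.cong refl) (simp add: mult.assoc)
  finally show ?thesis by (simp add: mult.assoc)
qed

lemma twist_eq:
  "twisted_lattice p1 p2 = range (\<lambda>m :: nat \<times> nat \<Rightarrow> int. \<lambda>ac. if ac \<in> gidx p1 p2 then
     kap p1 p2 ac * (\<Sum>ij\<in>gidx p1 p2. real_of_int (m ij * gcoef p1 p2 ij) *
      Re (cyc p1 (fst ac * fst ij)) * Re (cyc p2 (snd ac * snd ij))) else 0)"
proof -
  have "Re (gal_elem p1 p2 ac m) = (\<Sum>ij\<in>gidx p1 p2. real_of_int (m ij * gcoef p1 p2 ij) *
      Re (cyc p1 (fst ac * fst ij)) * Re (cyc p2 (snd ac * snd ij)))" for ac m
    unfolding gal_elem_def Re_sum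
  proof (intro sum.cong refl)
    fix ij :: "nat \<times> nat"
    define x1 where "x1 = Re (cyc p1 (fst ac * fst ij))"
    define x2 where "x2 = Re (cyc p2 (snd ac * snd ij))"
    have e1: "cyc p1 (fst ac * fst ij) = of_real x1" unfolding x1_def by (rule cyc_real)
    have e2: "cyc p2 (snd ac * snd ij) = of_real x2" unfolding x2_def by (rule cyc_real)
    show "Re (of_int (m ij * gcoef p1 p2 ij) * cyc p1 (fst ac * fst ij) * cyc p2 (snd ac * snd ij))
       = real_of_int (m ij * gcoef p1 p2 ij) * Re (cyc p1 (fst ac * fst ij)) * Re (cyc p2 (snd ac * snd ij))"
      unfolding e1 e2 x1_def[symmetric] x2_def[symmetric] by simp
  qed
  note re = this
  show ?thesis unfolding twisted_lattice_def kap_def re ..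
qed

theorem proposition3p7:
  fixes p1 p2 :: nat
  assumes "prime p1" and "prime p2" and "p1 \<ge> 5" and "p2 \<ge> 5" and "p1 \<noteq> p2"
  shows "\<exists>R. orthogonal_on (gidx p1 p2) R \<and> R ` Dlat (gidx p1 p2) = twisted_lattice p1 p2"
proof -
  define n1 where "n1 = (p1 - 1) div 2"
  define n2 where "n2 = (p2 - 1) div 2"
  have "odd p1" using assms(1,3) prime_odd_nat by auto
  then have p1: "p1 = 2 * n1 + 1" unfolding n1_def using assms(3) by presburger
  have "odd p2" using assms(2,4) prime_odd_nat by auto
  then have p2: "p2 = 2 * n2 + 1" unfolding n2_def using assms(4) by presburger
  have n1: "n1 \<ge> 1" and n2: "n2 \<ge> 1" using p1 p2 assms(3,4) by auto
  define S where "S = gidx p1 p2"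
  have S: "S = {1..n1} \<times> {1..n2}" unfolding S_def gidx_def n1_def n2_def ..
  have finS: "finite S" unfolding S by simp
  define N where "N = (n1, n2)"
  have NS: "N \<in> S" unfolding N_def S using n1 n2 by simp
  have gN: "gcoef p1 p2 ij = (if ij = N then 2 else 1)" for ij
    unfolding gcoef_def N_def n1_def n2_def ..
  have allN: "fst u \<le> fst N \<and> snd u \<le> snd N" if "u \<in> S" for u
    using that unfolding S N_def by auto
  define tw where "tw m = (\<lambda>ac. if ac \<in> S then
     kap p1 p2 ac * (\<Sum>ij\<in>S. real_of_int (m ij * gcoef p1 p2 ij) *
      Re (cyc p1 (fst ac * fst ij)) * Re (cyc p2 (snd ac * snd ij))) else 0)" for m :: "nat \<times> nat \<Rightarrow> int"
  have tl: "twisted_lattice p1 p2 = range tw" unfolding twist_eq tw_def S_def ..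
  have suff: "RR p1 p2 x = tw m" if h: "\<forall>ij\<in>S. PP S x ij = real_of_int (m ij * gcoef p1 p2 ij)" for x m
  proof (rule ext)
    fix ac
    show "RR p1 p2 x ac = tw m ac"
    proof (cases "ac \<in> S")
      case True
      then show ?thesis unfolding RR_eq[OF True[unfolded S_def]] tw_def S_def[symmetric]
        using h by (simp cong: sum.cong)
    next
      case False
      then show ?thesis unfolding RR_def tw_def S_def by simp
    qed
  qed
  define vec where "vec z = (\<lambda>k. if k \<in> S then real_of_int (z k) else 0)" for z :: "nat \<times> nat \<Rightarrow> int"
  define Zs where "Zs z ij = (\<Sum>u\<in>S. if fst u \<le> fst ij \<and> snd u \<le> snd ij then z u else 0)"
    for z :: "nat \<times> nat \<Rightarrow> int" and ij :: "nat \<times> nat"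
  have PZ: "PP S (vec z) ij = real_of_int (Zs z ij)" for z ij
    unfolding PP_def Zs_def vec_def of_int_sum by (intro sum.cong refl) auto
  have ZN: "Zs z N = (\<Sum>u\<in>S. z u)" for z
    unfolding Zs_def using allN by (intro sum.cong refl) auto
  have DS: "Dlat S = {vec z | z. even (\<Sum>k\<in>S. z k)}" unfolding Dlat_def vec_def ..
  have "RR p1 p2 ` Dlat S = range tw"
  proof
    show "RR p1 p2 ` Dlat S \<subseteq> range tw"
    proof
      fix x assume "x \<in> RR p1 p2 ` Dlat S"
      then obtain z where x: "x = RR p1 p2 (vec z)" and ev: "even (\<Sum>k\<in>S. z k)" unfolding DS by blast
      define m where "m ij = (if ij = N then (\<Sum>k\<in>S. z k) div 2 else Zs z ij)" for ij
      have e2: "(\<Sum>k\<in>S. z k) div 2 * 2 = (\<Sum>k\<in>S. z k)" using ev by simp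
      have "\<forall>ij\<in>S. Zs z ij = m ij * gcoef p1 p2 ij"
        unfolding m_def gN using e2 ZN by auto
      then have "\<forall>ij\<in>S. PP S (vec z) ij = real_of_int (m ij * gcoef p1 p2 ij)"
        unfolding PZ by simp
      then have "x = tw m" unfolding x by (rule suff)
      then show "x \<in> range tw" by simp
    qed
  next
    show "range tw \<subseteq> RR p1 p2 ` Dlat S"
    proof
      fix x assume "x \<in> range tw"
      then obtain m where x: "x = tw m" by blast
      define y where "y ij = m ij * gcoef p1 p2 ij" for ij
      define Y where "Y = (\<lambda>(i, j). if 1 \<le> i \<and> 1 \<le> j then y (i, j) else 0)"
      define z where "z u = Y (fst u, snd u) - Y (fst u - 1, snd u) - Y (fst u, snd u - 1) + Y (fst u - 1, snd u - 1)" for u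
      have Zy: "Zs z ij = y ij" if "ij \<in> S" for ij
      proof -
        obtain i j where ij: "ij = (i, j)" by (cases ij)
        have r: "1 \<le> i" "i \<le> n1" "1 \<le> j" "j \<le> n2" using that unfolding ij S by auto
        show ?thesis unfolding Zs_def S ij z_def Y_def using inv_diff[OF r, of y] by simp
      qed
      have ev: "even (\<Sum>k\<in>S. z k)" using ZN[of z] Zy[OF NS] unfolding y_def gN by (metis dvd_triv_right)
      have "RR p1 p2 (vec z) = tw m" by (rule suff) (simp add: PZ Zy y_def)
      moreover have "vec z \<in> Dlat S" unfolding DS using ev by blast
      ultimately show "x \<in> RR p1 p2 ` Dlat S" unfolding x by (metis image_eqI)
    qed
  qed
  moreover have "orthogonal_on S (RR p1 p2)"
    unfolding RR_def S_def[symmetric]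
    by (rule orth_kernel[OF finS]) (use kernel_on[OF p1 p2] in \<open>simp add: S_def\<close>)
  ultimately show ?thesis unfolding S_def tl by blast
qed

end
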